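(* Let $(X_\lambda)_{\lambda\in\Lambda}$ be a family of topological spaces such that $C(X_{\lambda_0})$ has the countable sup property for some $\lambda_0\in\Lambda$ and $X_\lambda$ has calibre $\aleph_1$ for every $\lambda\in\Lambda\setminus\{\lambda_0\}$. Then $C(\prod_{\lambda\in\Lambda}X_\lambda)$ has the countable sup property.
   Context: Products carry the product topology. $C(Z)$ is the vector lattice of real-valued continuous functions on $Z$ with the pointwise order. A vector lattice has the countable sup property if every nonempty subset possessing a supremum contains a countable subset with the same supremum. A space has calibre $\aleph_1$ if every uncountable family of nonempty open subsets contains an uncountable subfamily with nonempty intersection. *)

theory Defs
  imports "HOL-Analysis.Analysis"
begin

text \<open>The vector lattice C(X) of real-valued continuous functions on X.  Elements are
  represented canonically by functions that vanish outside the topological space.\<close>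
definition cont_funs :: "'a topology \<Rightarrow> ('a \<Rightarrow> real) set" where
  "cont_funs X = {f. continuous_map X euclideanreal f \<and> (\<forall>x. x \<notin> topspace X \<longrightarrow> f x = 0)}"

definition le_C :: "'a topology \<Rightarrow> ('a \<Rightarrow> real) \<Rightarrow> ('a \<Rightarrow> real) \<Rightarrow> bool" where
  "le_C X f g \<longleftrightarrow> (\<forall>x\<in>topspace X. f x \<le> g x)"

definition is_sup_C :: "'a topology \<Rightarrow> ('a \<Rightarrow> real) set \<Rightarrow> ('a \<Rightarrow> real) \<Rightarrow> bool" where
  "is_sup_C X F s \<longleftrightarrow> s \<in> cont_funs X \<and> (\<forall>g\<in>F. le_C X g s) \<and>
     (\<forall>h\<in>cont_funs X. (\<forall>g\<in>F. le_C X g h) \<longrightarrow> le_C X s h)"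

definition countable_sup_property :: "'a topology \<Rightarrow> bool" where
  "countable_sup_property X \<longleftrightarrow>
     (\<forall>F s. F \<subseteq> cont_funs X \<and> F \<noteq> {} \<and> is_sup_C X F s \<longrightarrow>
        (\<exists>G\<subseteq>F. countable G \<and> is_sup_C X G s))"

definition calibre_aleph1 :: "'a topology \<Rightarrow> bool" where
  "calibre_aleph1 X \<longleftrightarrow>
     (\<forall>\<U>. \<U> \<subseteq> {U. openin X U \<and> U \<noteq> {}} \<and> uncountable \<U> \<longrightarrow>
        (\<exists>\<V>\<subseteq>\<U>. uncountable \<V> \<and> \<Inter>\<V> \<noteq> {}))"

end

theory Submission
  imports Defs
begin

definition czs :: "'a topology \<Rightarrow> 'a set \<Rightarrow> bool" where
  "czs X W \<longleftrightarrow> (\<exists>h. continuous_map X euclideanreal h \<and> W = {x\<in>topspace X. h x > 0})"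

definition cccz :: "'a topology \<Rightarrow> bool" where
  "cccz X \<longleftrightarrow> (\<forall>\<W>. (\<forall>W\<in>\<W>. czs X W \<and> W \<noteq> {}) \<and> pairwise disjnt \<W> \<longrightarrow> countable \<W>)"

lemma czs_subset: "czs X W \<Longrightarrow> W \<subseteq> topspace X"
  unfolding czs_def by auto

lemma czs_Int: "czs X A \<Longrightarrow> czs X B \<Longrightarrow> czs X (A \<inter> B)"
  unfolding czs_def
proof (elim exE conjE)
  fix h k assume h: "continuous_map X euclideanreal h" and A: "A = {x \<in> topspace X. 0 < h x}"
    and k: "continuous_map X euclideanreal k" and B: "B = {x \<in> topspace X. 0 < k x}"
  show "\<exists>g. continuous_map X euclideanreal g \<and> A \<inter> B = {x \<in> topspace X. 0 < g x}"
    by (rule exI[of _ "\<lambda>x. min (h x) (k x)"]) (auto simp: A B intro: continuous_map_real_min h k)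
qed

lemma sup_iff:
  assumes G: "G \<subseteq> cont_funs X" and s: "s \<in> cont_funs X" and le: "\<forall>g\<in>G. le_C X g s"
  shows "is_sup_C X G s \<longleftrightarrow> (\<forall>e>0. \<forall>W. czs X W \<and> W \<noteq> {} \<longrightarrow> (\<exists>g\<in>G. \<exists>x\<in>W. s x - e < g x))"
proof
  assume sup: "is_sup_C X G s"
  show "\<forall>e>0. \<forall>W. czs X W \<and> W \<noteq> {} \<longrightarrow> (\<exists>g\<in>G. \<exists>x\<in>W. s x - e < g x)"
  proof (intro allI impI, rule ccontr)
    fix e :: real and W
    assume e: "e > 0" and W: "czs X W \<and> W \<noteq> {}" and no: "\<not> (\<exists>g\<in>G. \<exists>x\<in>W. s x - e < g x)"
    from W obtain k where k: "continuous_map X euclideanreal k" and Wk: "W = {x\<in>topspace X. k x > 0}"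
      unfolding czs_def by auto
    from W obtain x0 where x0: "x0 \<in> W" by auto
    have sc: "continuous_map X euclideanreal s" using s by (simp add: cont_funs_def)
    define h where "h x = (if x \<in> topspace X then s x - max 0 (min (k x) e) else 0)" for x
    have "continuous_map X euclideanreal (\<lambda>x. s x - max 0 (min (k x) e))"
      by (intro continuous_intros sc k)
    hence hc: "continuous_map X euclideanreal h"
      by (rule continuous_map_eq) (simp add: h_def)
    have hC: "h \<in> cont_funs X" using hc by (simp add: cont_funs_def h_def)
    have ub: "\<forall>g\<in>G. le_C X g h"
    proof (intro ballI)
      fix g assume g: "g \<in> G"
      show "le_C X g h" unfolding le_C_def
      proof
        fix x assume x: "x \<in> topspace X"
        show "g x \<le> h x"
        proof (cases "x \<in> W")
          case True
          hence "g x \<le> s x - e" using no g by force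
          moreover have "k x > 0" using True Wk by auto
          moreover have "max 0 (min (k x) e) \<le> e" using e by simp
          ultimately show ?thesis using x by (simp add: h_def)
        next
          case False
          hence "k x \<le> 0" using x Wk by auto
          moreover have "g x \<le> s x" using le g x by (simp add: le_C_def)
          ultimately show ?thesis using x by (simp add: h_def)
        qed
      qed
    qed
    hence "le_C X s h" using sup hC by (simp add: is_sup_C_def)
    moreover have "x0 \<in> topspace X" "k x0 > 0" using x0 Wk by auto
    ultimately show False using e by (auto simp: le_C_def h_def)
  qed
next
  assume crit: "\<forall>e>0. \<forall>W. czs X W \<and> W \<noteq> {} \<longrightarrow> (\<exists>g\<in>G. \<exists>x\<in>W. s x - e < g x)"
  show "is_sup_C X G s" unfolding is_sup_C_def
  proof (intro conjI ballI impI)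
    show "s \<in> cont_funs X" by fact
    show "\<And>g. g \<in> G \<Longrightarrow> le_C X g s" using le by auto
    fix h assume hC: "h \<in> cont_funs X" and ub: "\<forall>g\<in>G. le_C X g h"
    show "le_C X s h" unfolding le_C_def
    proof (rule ballI, rule ccontr)
      fix x0 assume x0: "x0 \<in> topspace X" and nle: "\<not> s x0 \<le> h x0"
      define e where "e = (s x0 - h x0) / 2"
      have e: "e > 0" using nle by (simp add: e_def)
      define W where "W = {x\<in>topspace X. s x - h x - e > 0}"
      have "continuous_map X euclideanreal (\<lambda>x. s x - h x - e)"
        using s hC by (intro continuous_intros) (auto simp: cont_funs_def)
      hence "czs X W" unfolding czs_def W_def by blast
      moreover have "x0 \<in> W" using x0 e by (simp add: W_def e_def)
      ultimately obtain g x where g: "g \<in> G" and x: "x \<in> W" and gx: "s x - e < g x"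
        using crit e by blast
      have "g x \<le> h x" using ub g x by (auto simp: le_C_def W_def)
      thus False using x gx by (simp add: W_def)
    qed
  qed
qed

lemma maximal_pairwise:
  "\<exists>M\<subseteq>A. pairwise R M \<and> (\<forall>z\<in>A - M. \<exists>y\<in>M. \<not> (R z y \<and> R y z))"
proof -
  define \<C> where "\<C> = {M. M \<subseteq> A \<and> pairwise R M}"
  have "\<forall>C\<in>chains \<C>. \<Union>C \<in> \<C>"
  proof
    fix C assume C: "C \<in> chains \<C>"
    hence sub: "C \<subseteq> \<C>" and ch: "\<forall>M1\<in>C. \<forall>M2\<in>C. M1 \<subseteq> M2 \<or> M2 \<subseteq> M1"
      by (auto simp: chains_def chain_subset_def)
    have "\<Union>C \<subseteq> A" using sub by (auto simp: \<C>_def)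
    moreover have "pairwise R (\<Union>C)"
      unfolding pairwise_def
    proof (intro ballI impI)
      fix x y assume "x \<in> \<Union>C" "y \<in> \<Union>C" "x \<noteq> y"
      then obtain M1 M2 where M12: "M1 \<in> C" "M2 \<in> C" "x \<in> M1" "y \<in> M2" by auto
      have "\<exists>M\<in>C. x \<in> M \<and> y \<in> M"
      proof (cases "M1 \<subseteq> M2")
        case True thus ?thesis using M12 by blast
      next
        case False hence "M2 \<subseteq> M1" using ch M12 by blast
        thus ?thesis using M12 by blast
      qed
      then obtain M where M: "M \<in> C" "x \<in> M" "y \<in> M" by blast
      have "pairwise R M" using sub M by (auto simp: \<C>_def)
      thus "R x y" using M \<open>x \<noteq> y\<close> by (simp add: pairwise_def)
    qed
    ultimately show "\<Union>C \<in> \<C>" by (simp add: \<C>_def)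
  qed
  from Zorn_Lemma[OF this] obtain M where M: "M \<in> \<C>" and max: "\<forall>X\<in>\<C>. M \<subseteq> X \<longrightarrow> X = M"
    by blast
  have "\<forall>z\<in>A - M. \<exists>y\<in>M. \<not> (R z y \<and> R y z)"
  proof (rule ballI, rule ccontr)
    fix z assume z: "z \<in> A - M" and all: "\<not> (\<exists>y\<in>M. \<not> (R z y \<and> R y z))"
    have "insert z M \<in> \<C>" using M z all by (auto simp: \<C>_def pairwise_insert)
    with max have "insert z M = M" by blast
    with z show False by blast
  qed
  with M show ?thesis by (auto simp: \<C>_def)
qed

lemma csp_of_cccz:
  assumes ccc: "cccz X"
  shows "countable_sup_property X"
  unfolding countable_sup_property_def
proof (intro allI impI)
  fix F s assume asm: "F \<subseteq> cont_funs X \<and> F \<noteq> {} \<and> is_sup_C X F s"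
  hence FC: "F \<subseteq> cont_funs X" and sup: "is_sup_C X F s" by auto
  have s: "s \<in> cont_funs X" and le: "\<forall>g\<in>F. le_C X g s" using sup by (auto simp: is_sup_C_def)
  have sc: "continuous_map X euclideanreal s" using s by (simp add: cont_funs_def)
  have critF: "\<forall>e>0. \<forall>W. czs X W \<and> W \<noteq> {} \<longrightarrow> (\<exists>g\<in>F. \<exists>x\<in>W. s x - e < g x)"
    using sup_iff[OF FC s le] sup by blast
  define A where "A n = {W. czs X W \<and> W \<noteq> {} \<and> (\<exists>f\<in>F. \<forall>x\<in>W. s x - inverse (real (Suc n)) < f x)}" for n
  have "\<forall>n. \<exists>M\<subseteq>A n. pairwise disjnt M \<and> (\<forall>z\<in>A n - M. \<exists>y\<in>M. \<not> (disjnt z y \<and> disjnt y z))"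
    using maximal_pairwise by blast
  then obtain M where MA: "\<And>n. M n \<subseteq> A n" and Mp: "\<And>n. pairwise disjnt (M n)"
    and Mmax: "\<And>n. \<forall>z\<in>A n - M n. \<exists>y\<in>M n. \<not> (disjnt z y \<and> disjnt y z)"
    by metis
  have Mc: "countable (M n)" for n
  proof -
    have "\<forall>W\<in>M n. czs X W \<and> W \<noteq> {}" using MA[of n] by (auto simp: A_def)
    thus ?thesis using ccc Mp[of n] unfolding cccz_def by blast
  qed
  have "\<forall>n. \<forall>W\<in>M n. \<exists>f\<in>F. \<forall>x\<in>W. s x - inverse (real (Suc n)) < f x"
    using MA unfolding A_def by blast
  then obtain fs where fs: "\<And>n W. W \<in> M n \<Longrightarrow> fs n W \<in> F \<and> (\<forall>x\<in>W. s x - inverse (real (Suc n)) < fs n W x)"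
    by metis
  define G where "G = (\<Union>n. fs n ` M n)"
  have GF: "G \<subseteq> F" using fs by (auto simp: G_def)
  have Gc: "countable G" using Mc by (auto simp: G_def)
  have GC: "G \<subseteq> cont_funs X" using GF FC by auto
  have leG: "\<forall>g\<in>G. le_C X g s" using GF le by auto
  have "is_sup_C X G s"
    unfolding sup_iff[OF GC s leG]
  proof (intro allI impI)
    fix e :: real and W assume e: "e > 0" and W: "czs X W \<and> W \<noteq> {}"
    obtain n where n: "inverse (real (Suc n)) < e" using reals_Archimedean[OF e] by blast
    have pos: "inverse (real (Suc n)) > 0" by simp
    obtain f x where f: "f \<in> F" and x: "x \<in> W" and fx: "s x - inverse (real (Suc n)) < f x"
      using critF pos W by blast
    have fc: "continuous_map X euclideanreal f" using f FC by (auto simp: cont_funs_def)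
    define W' where "W' = W \<inter> {y\<in>topspace X. f y - s y + inverse (real (Suc n)) > 0}"
    have "czs X {y\<in>topspace X. f y - s y + inverse (real (Suc n)) > 0}"
      unfolding czs_def by (rule exI, rule conjI[OF _ refl]) (intro continuous_intros fc sc)
    hence cW': "czs X W'" unfolding W'_def using W czs_Int by blast
    have xW': "x \<in> W'" using x fx W czs_subset[of X W] by (auto simp: W'_def)
    have "\<forall>y\<in>W'. s y - inverse (real (Suc n)) < f y" by (auto simp: W'_def)
    hence W'A: "W' \<in> A n" unfolding A_def using cW' xW' f by blast
    obtain Y where Y: "Y \<in> M n" and YW: "W' \<inter> Y \<noteq> {}"
    proof (cases "W' \<in> M n")
      case True thus ?thesis using that xW' by blast
    next
      case False
      then obtain y where "y \<in> M n" "\<not> (disjnt W' y \<and> disjnt y W')" using Mmax[of n] W'A by blast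
      thus ?thesis using that by (auto simp: disjnt_def)
    qed
    then obtain z where z: "z \<in> W'" "z \<in> Y" by blast
    have "fs n Y \<in> G" using Y by (auto simp: G_def)
    moreover have "s z - e < fs n Y z" using fs[OF Y] z n by force
    moreover have "z \<in> W" using z by (simp add: W'_def)
    ultimately show "\<exists>g\<in>G. \<exists>x\<in>W. s x - e < g x" by blast
  qed
  thus "\<exists>G\<subseteq>F. countable G \<and> is_sup_C X G s" using GF Gc by blast
qed

lemma cccz_of_csp:
  assumes csp: "countable_sup_property X"
  shows "cccz X"
  unfolding cccz_def
proof (intro allI impI, rule ccontr)
  fix \<W> assume HW: "(\<forall>W\<in>\<W>. czs X W \<and> W \<noteq> {}) \<and> pairwise disjnt \<W>" and unc: "uncountable \<W>"
  define coz where "coz h = {x\<in>topspace X. h x > 0}" for h :: "'a \<Rightarrow> real"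
  define H where "H = {h. continuous_map X euclideanreal h \<and> (coz h \<in> \<W> \<or> (\<forall>W\<in>\<W>. disjnt (coz h) W))}"
  define fh where "fh h n x = (if x \<in> topspace X then min 1 (real n * max 0 (h x)) else 0)"
    for h :: "'a \<Rightarrow> real" and n :: nat and x
  define s where "s x = (if x \<in> topspace X then 1 else (0::real))" for x
  define F where "F = (\<lambda>(h,n). fh h n) ` (H \<times> UNIV)"
  have fhC: "fh h n \<in> cont_funs X" if "h \<in> H" for h n
  proof -
    have hc: "continuous_map X euclideanreal h" using that by (simp add: H_def)
    have "continuous_map X euclideanreal (\<lambda>x. min 1 (real n * max 0 (h x)))"
      by (intro continuous_intros hc)
    hence "continuous_map X euclideanreal (fh h n)"
      by (rule continuous_map_eq) (simp add: fh_def)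
    thus ?thesis by (simp add: cont_funs_def fh_def)
  qed
  have sC: "s \<in> cont_funs X"
  proof -
    have "continuous_map X euclideanreal (\<lambda>x. 1::real)" by simp
    hence "continuous_map X euclideanreal s"
      by (rule continuous_map_eq) (simp add: s_def)
    thus ?thesis by (simp add: cont_funs_def s_def)
  qed
  have FC: "F \<subseteq> cont_funs X" using fhC by (auto simp: F_def)
  have leF: "\<forall>g\<in>F. le_C X g s" by (auto simp: F_def le_C_def fh_def s_def)
  have Wcoz: "\<exists>h\<in>H. coz h = W" if "W \<in> \<W>" for W
  proof -
    from that HW obtain h where "continuous_map X euclideanreal h" "W = coz h"
      unfolding czs_def coz_def by blast
    thus ?thesis using that by (auto simp: H_def)
  qed
  have big: "\<exists>n. fh h n x = 1" if "h \<in> H" "x \<in> coz h" for h x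
  proof -
    have "h x > 0" "x \<in> topspace X" using that by (auto simp: coz_def)
    then obtain n where "1 < real n * h x" using ex_less_of_nat_mult by blast
    hence "fh h n x = 1" using \<open>h x > 0\<close> \<open>x \<in> topspace X\<close> by (simp add: fh_def)
    thus ?thesis by blast
  qed
  have "is_sup_C X F s"
    unfolding sup_iff[OF FC sC leF]
  proof (intro allI impI)
    fix e :: real and V assume e: "e > 0" and V: "czs X V \<and> V \<noteq> {}"
    obtain h x where h: "h \<in> H" and x: "x \<in> V" and xh: "x \<in> coz h"
    proof (cases "\<exists>W\<in>\<W>. V \<inter> W \<noteq> {}")
      case True
      then obtain W x where Wx: "W \<in> \<W>" "x \<in> V" "x \<in> W" by blast
      then obtain h where "h \<in> H" "coz h = W" using Wcoz by blast
      thus ?thesis using that Wx by blast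
    next
      case False
      from V obtain k where k: "continuous_map X euclideanreal k" and Vk: "V = coz k"
        unfolding czs_def coz_def by blast
      have "k \<in> H" using False k Vk by (auto simp: H_def disjnt_def)
      thus ?thesis using that V Vk by blast
    qed
    obtain n where n: "fh h n x = 1" using big[OF h xh] by blast
    have "x \<in> topspace X" using xh by (simp add: coz_def)
    hence "s x - e < fh h n x" using n e by (simp add: s_def)
    moreover have "fh h n \<in> F" using h by (auto simp: F_def)
    ultimately show "\<exists>g\<in>F. \<exists>x\<in>V. s x - e < g x" using x by blast
  qed
  moreover have "F \<noteq> {}"
  proof -
    obtain W where "W \<in> \<W>" using unc by (metis countable_empty ex_in_conv)
    then obtain h where "h \<in> H" using Wcoz by blast
    thus ?thesis by (auto simp: F_def)
  qed
  ultimately obtain G where GF: "G \<subseteq> F" and Gc: "countable G" and supG: "is_sup_C X G s"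
    using csp FC unfolding countable_sup_property_def by blast
  obtain P where Pc: "countable P" and PH: "P \<subseteq> H \<times> UNIV" and GP: "G = (\<lambda>(h,n). fh h n) ` P"
    using countable_subset_image[of G "\<lambda>(h,n). fh h n" "H \<times> UNIV"] GF Gc unfolding F_def by blast
  have "countable ((\<lambda>p. coz (fst p)) ` P)" using Pc by simp
  hence "uncountable (\<W> - (\<lambda>p. coz (fst p)) ` P)" using unc uncountable_minus_countable by blast
  then obtain W0 where W0: "W0 \<in> \<W>" and W0P: "W0 \<notin> (\<lambda>p. coz (fst p)) ` P"
    by (metis Diff_iff countable_empty ex_in_conv)
  have GC: "G \<subseteq> cont_funs X" and leG: "\<forall>g\<in>G. le_C X g s" using GF FC leF by auto
  have "czs X W0 \<and> W0 \<noteq> {}" using W0 HW by blast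
  moreover have critG: "\<forall>e>0. \<forall>W. czs X W \<and> W \<noteq> {} \<longrightarrow> (\<exists>g\<in>G. \<exists>x\<in>W. s x - e < g x)"
    using supG sup_iff[OF GC sC leG] by blast
  moreover have half: "(1/2::real) > 0" by simp
  ultimately obtain g x where g: "g \<in> G" and x: "x \<in> W0" and gx: "s x - 1/2 < g x"
    by blast
  obtain h n where hn: "(h,n) \<in> P" and ghn: "g = fh h n" using g GP by auto
  have hH: "h \<in> H" using hn PH by auto
  have ne: "coz h \<noteq> W0" using W0P hn by force
  have hH': "coz h \<in> \<W> \<or> (\<forall>W\<in>\<W>. disjnt (coz h) W)" using hH by (simp add: H_def)
  have "disjnt (coz h) W0"
  proof (cases "coz h \<in> \<W>")
    case True
    have "pairwise disjnt \<W>" using HW by blast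
    thus ?thesis using True W0 ne unfolding pairwise_def by blast
  next
    case False thus ?thesis using hH' W0 by blast
  qed
  hence "x \<notin> coz h" using x by (auto simp: disjnt_def)
  moreover have xt: "x \<in> topspace X" using x W0 HW czs_subset by blast
  ultimately have "h x \<le> 0" by (simp add: coz_def)
  hence "g x = 0" using xt by (simp add: ghn fh_def)
  thus False using gx xt by (simp add: s_def)
qed

lemma calibre_index:
  assumes cal: "calibre_aleph1 Y" and unc: "uncountable I"
    and U: "\<forall>i\<in>I. openin Y (U i) \<and> U i \<noteq> {}"
  shows "\<exists>J\<subseteq>I. uncountable J \<and> (\<Inter>i\<in>J. U i) \<noteq> {}"
proof (cases "countable (U ` I)")
  case True
  have "I = (\<Union>W\<in>U ` I. {i\<in>I. U i = W})" by auto
  moreover have "\<not> countable (\<Union>W\<in>U ` I. {i\<in>I. U i = W})" using unc calculation by simp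
  ultimately obtain W where W: "W \<in> U ` I" and Wu: "uncountable {i\<in>I. U i = W}"
    using True by (metis (no_types, lifting) countable_UN)
  then obtain i0 where i0: "i0 \<in> I" "U i0 = W" by blast
  have "(\<Inter>i\<in>{i\<in>I. U i = W}. U i) = W" using i0 by auto
  moreover have "W \<noteq> {}" using i0 U by auto
  ultimately show ?thesis using Wu by (intro exI[of _ "{i\<in>I. U i = W}"]) auto
next
  case False
  have "U ` I \<subseteq> {V. openin Y V \<and> V \<noteq> {}}" using U by auto
  hence "\<exists>\<V>\<subseteq>U ` I. uncountable \<V> \<and> \<Inter>\<V> \<noteq> {}"
    using cal[unfolded calibre_aleph1_def, rule_format, of "U ` I"] False by blast
  then obtain \<V> where V0: "\<V> \<subseteq> U ` I \<and> uncountable \<V> \<and> \<Inter>\<V> \<noteq> {}" ..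
  hence V: "\<V> \<subseteq> U ` I" "uncountable \<V>" "\<Inter>\<V> \<noteq> {}" by auto
  define J where "J = {i\<in>I. U i \<in> \<V>}"
  have UJ: "U ` J = \<V>" using V(1) by (auto simp: J_def)
  have "uncountable J"
  proof
    assume "countable J"
    hence "countable (U ` J)" by simp
    thus False using UJ V(2) by simp
  qed
  moreover have "(\<Inter>i\<in>J. U i) = \<Inter>\<V>" using UJ by simp
  ultimately show ?thesis using V(3) by (intro exI[of _ J] conjI) (auto simp: J_def)
qed

lemma calib_prod:
  fixes X :: "'i \<Rightarrow> 'a topology" and V :: "'j \<Rightarrow> 'i \<Rightarrow> 'a set"
  assumes cal: "\<forall>l\<in>L. calibre_aleph1 (X l)" and ne: "\<forall>l\<in>L. topspace (X l) \<noteq> {}"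
  shows "\<forall>S I. uncountable I \<and> (\<forall>i\<in>I. finite (S i) \<and> card (S i) \<le> n \<and> S i \<subseteq> L \<and>
            (\<forall>l\<in>S i. openin (X l) (V i l) \<and> V i l \<noteq> {})) \<longrightarrow>
          (\<exists>J\<subseteq>I. uncountable J \<and> (\<exists>q. (\<forall>l\<in>L. q l \<in> topspace (X l)) \<and> (\<forall>i\<in>J. \<forall>l\<in>S i. q l \<in> V i l)))"
proof (induction n)
  case 0
  show ?case
  proof (intro allI impI)
    fix S :: "'j \<Rightarrow> 'i set" and I
    assume a: "uncountable I \<and> (\<forall>i\<in>I. finite (S i) \<and> card (S i) \<le> 0 \<and> S i \<subseteq> L \<and>
            (\<forall>l\<in>S i. openin (X l) (V i l) \<and> V i l \<noteq> {}))"
    define q where "q l = (SOME x. x \<in> topspace (X l))" for l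
    have "\<forall>l\<in>L. q l \<in> topspace (X l)" using ne unfolding q_def by (metis ex_in_conv someI_ex)
    moreover have "\<forall>i\<in>I. S i = {}" using a by auto
    hence "\<forall>i\<in>I. \<forall>l\<in>S i. q l \<in> V i l" by blast
    ultimately show "\<exists>J\<subseteq>I. uncountable J \<and> (\<exists>q. (\<forall>l\<in>L. q l \<in> topspace (X l)) \<and> (\<forall>i\<in>J. \<forall>l\<in>S i. q l \<in> V i l))"
      using a by (intro exI[of _ I] conjI subset_refl exI[of _ q]) auto
  qed
next
  case (Suc n)
  show ?case
  proof (intro allI impI)
    fix S :: "'j \<Rightarrow> 'i set" and I
    assume a: "uncountable I \<and> (\<forall>i\<in>I. finite (S i) \<and> card (S i) \<le> Suc n \<and> S i \<subseteq> L \<and>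
            (\<forall>l\<in>S i. openin (X l) (V i l) \<and> V i l \<noteq> {}))"
    hence unc: "uncountable I" and fin: "\<And>i. i \<in> I \<Longrightarrow> finite (S i)"
      and cardS: "\<And>i. i \<in> I \<Longrightarrow> card (S i) \<le> Suc n" and SL: "\<And>i. i \<in> I \<Longrightarrow> S i \<subseteq> L"
      and VV: "\<And>i l. i \<in> I \<Longrightarrow> l \<in> S i \<Longrightarrow> openin (X l) (V i l) \<and> V i l \<noteq> {}"
      by auto
    show "\<exists>J\<subseteq>I. uncountable J \<and> (\<exists>q. (\<forall>l\<in>L. q l \<in> topspace (X l)) \<and> (\<forall>i\<in>J. \<forall>l\<in>S i. q l \<in> V i l))"
    proof (cases "\<exists>l. uncountable {i\<in>I. l \<in> S i}")
      case True
      then obtain l where l: "uncountable {i\<in>I. l \<in> S i}" by blast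
      define I1 where "I1 = {i\<in>I. l \<in> S i}"
      obtain i1 where "i1 \<in> I1" using l unfolding I1_def by (metis countable_empty ex_in_conv)
      hence lL: "l \<in> L" using SL by (auto simp: I1_def)
      have I1V: "\<forall>i\<in>I1. openin (X l) (V i l) \<and> V i l \<noteq> {}" using VV by (auto simp: I1_def)
      have I1u: "uncountable I1" using l by (simp add: I1_def)
      have calX: "calibre_aleph1 (X l)" using cal lL by blast
      have "\<exists>J\<subseteq>I1. uncountable J \<and> (\<Inter>i\<in>J. V i l) \<noteq> {}"
        by (rule calibre_index[OF calX I1u I1V])
      then obtain J2 where J20: "J2 \<subseteq> I1 \<and> uncountable J2 \<and> (\<Inter>i\<in>J2. V i l) \<noteq> {}" ..
      hence J2: "J2 \<subseteq> I1" "uncountable J2" "(\<Inter>i\<in>J2. V i l) \<noteq> {}" by auto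
      then obtain a where "a \<in> (\<Inter>i\<in>J2. V i l)" by (meson ex_in_conv)
      hence aV: "\<forall>i\<in>J2. a \<in> V i l" by simp
      obtain i2 where i2: "i2 \<in> J2" using J2(2) by (metis countable_empty ex_in_conv)
      have "i2 \<in> I" "l \<in> S i2" using i2 J2(1) by (auto simp: I1_def)
      hence "openin (X l) (V i2 l)" using VV by blast
      hence "V i2 l \<subseteq> topspace (X l)" by (rule openin_subset)
      hence aT: "a \<in> topspace (X l)" using aV i2 by blast
      have "\<forall>i\<in>J2. finite (S i - {l}) \<and> card (S i - {l}) \<le> n \<and> S i - {l} \<subseteq> L \<and>
            (\<forall>l'\<in>S i - {l}. openin (X l') (V i l') \<and> V i l' \<noteq> {})"
      proof
        fix i assume i: "i \<in> J2"
        hence iI: "i \<in> I" and li: "l \<in> S i" using J2(1) by (auto simp: I1_def)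
        have "card (S i - {l}) = card (S i) - 1" using li fin[OF iI] by simp
        thus "finite (S i - {l}) \<and> card (S i - {l}) \<le> n \<and> S i - {l} \<subseteq> L \<and>
            (\<forall>l'\<in>S i - {l}. openin (X l') (V i l') \<and> V i l' \<noteq> {})"
          using fin[OF iI] cardS[OF iI] SL[OF iI] VV[OF iI] by auto
      qed
      hence "uncountable J2 \<and> (\<forall>i\<in>J2. finite (S i - {l}) \<and> card (S i - {l}) \<le> n \<and> S i - {l} \<subseteq> L \<and>
            (\<forall>l'\<in>S i - {l}. openin (X l') (V i l') \<and> V i l' \<noteq> {}))" using J2(2) by blast
      from Suc.IH[rule_format, OF this] obtain J where
        J0: "J \<subseteq> J2 \<and> uncountable J \<and> (\<exists>q. (\<forall>l\<in>L. q l \<in> topspace (X l)) \<and> (\<forall>i\<in>J. \<forall>l'\<in>S i - {l}. q l' \<in> V i l'))" ..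
      have J: "J \<subseteq> J2" "uncountable J" using J0 by auto
      from conjunct2[OF conjunct2[OF J0]] obtain q where
        qq: "(\<forall>l\<in>L. q l \<in> topspace (X l)) \<and> (\<forall>i\<in>J. \<forall>l'\<in>S i - {l}. q l' \<in> V i l')" ..
      hence q: "\<forall>l\<in>L. q l \<in> topspace (X l)"
        and qV: "\<forall>i\<in>J. \<forall>l'\<in>S i - {l}. q l' \<in> V i l'" by auto
      have "\<forall>l'\<in>L. (q(l := a)) l' \<in> topspace (X l')" using q aT by auto
      moreover have "\<forall>i\<in>J. \<forall>l'\<in>S i. (q(l := a)) l' \<in> V i l'"
        using qV aV J(1) by auto
      moreover have "J \<subseteq> I" using J(1) J2(1) by (auto simp: I1_def)
      ultimately show ?thesis using J(2) by (intro exI[of _ J] conjI exI[of _ "q(l := a)"]) auto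
    next
      case False
      hence cnt: "\<And>l. countable {i\<in>I. l \<in> S i}" by blast
      obtain M where MI: "M \<subseteq> I" and Mp: "pairwise (\<lambda>i j. disjnt (S i) (S j)) M"
        and Mmax: "\<forall>z\<in>I - M. \<exists>y\<in>M. \<not> (disjnt (S z) (S y) \<and> disjnt (S y) (S z))"
        using maximal_pairwise[of I "\<lambda>i j. disjnt (S i) (S j)"] by blast
      have Mu: "uncountable M"
      proof
        assume Mc: "countable M"
        define B where "B = M \<union> (\<Union>l\<in>(\<Union>j\<in>M. S j). {i\<in>I. l \<in> S i})"
        have "countable (\<Union>j\<in>M. S j)" using Mc MI fin by (meson countable_UN countable_finite subsetD)
        hence "countable B" using Mc cnt unfolding B_def by blast
        hence "uncountable (I - B)" using unc uncountable_minus_countable by blast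
        then obtain z where z: "z \<in> I - B" by (metis countable_empty ex_in_conv)
        hence "z \<in> I - M" by (auto simp: B_def)
        then obtain y where y: "y \<in> M" "\<not> (disjnt (S z) (S y) \<and> disjnt (S y) (S z))" using Mmax by blast
        then obtain l where "l \<in> S z" "l \<in> S y" by (auto simp: disjnt_def)
        hence "z \<in> B" using y(1) z unfolding B_def by blast
        thus False using z by blast
      qed
      define q where "q l = (if \<exists>j\<in>M. l \<in> S j then SOME x. x \<in> V (SOME j. j\<in>M \<and> l \<in> S j) l
                          else SOME x. x \<in> topspace (X l))" for l
      have qV: "q l \<in> V i l" if i: "i \<in> M" and l: "l \<in> S i" for i l
      proof -
        define j0 where "j0 = (SOME j. j\<in>M \<and> l \<in> S j)"
        have ex: "\<exists>j. j\<in>M \<and> l \<in> S j" using i l by blast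
        have "j0 \<in> M \<and> l \<in> S j0" unfolding j0_def by (rule someI_ex[OF ex])
        hence j0: "j0 \<in> M" "l \<in> S j0" by auto
        have "j0 = i"
        proof (rule ccontr)
          assume "j0 \<noteq> i"
          hence "i \<noteq> j0" by simp
          hence "disjnt (S i) (S j0)" using pairwiseD[OF Mp i j0(1)] by simp
          thus False using l j0(2) by (auto simp: disjnt_def)
        qed
        have "i \<in> I" using i MI by blast
        hence "V i l \<noteq> {}" using VV[of i l] l by blast
        hence sm: "(SOME x. x \<in> V i l) \<in> V i l" by (simp add: some_in_eq)
        have "\<exists>j\<in>M. l \<in> S j" using i l by blast
        hence "q l = (SOME x. x \<in> V j0 l)" by (simp add: q_def j0_def)
        hence "q l = (SOME x. x \<in> V i l)" using \<open>j0 = i\<close> by simp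
        thus ?thesis using sm by simp
      qed
      have qT: "q l \<in> topspace (X l)" if l: "l \<in> L" for l
      proof (cases "\<exists>j\<in>M. l \<in> S j")
        case True
        then obtain j where j: "j \<in> M" "l \<in> S j" by blast
        have qj: "q l \<in> V j l" by (rule qV[OF j])
        have "j \<in> I" using j MI by blast
        hence "openin (X l) (V j l)" using VV[of j l] j by blast
        hence "V j l \<subseteq> topspace (X l)" by (rule openin_subset)
        thus ?thesis using qj by blast
      next
        case False
        hence "q l = (SOME x. x \<in> topspace (X l))" by (simp add: q_def)
        moreover have "topspace (X l) \<noteq> {}" using ne l by blast
        ultimately show ?thesis by (simp add: some_in_eq)
      qed
      show ?thesis using MI Mu qV qT by (intro exI[of _ M] conjI exI[of _ q]) auto
    qed
  qed
qed

lemma cozero_open: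
  assumes "continuous_map X euclideanreal h"
  shows "openin X {x\<in>topspace X. h x > 0}"
proof -
  have "openin X {x\<in>topspace X. h x \<in> {0<..}}"
    by (rule openin_continuous_map_preimage[OF assms]) simp
  thus ?thesis by simp
qed

lemma prod_cccz:
  fixes X :: "'i \<Rightarrow> 'a topology"
  assumes l0: "l0 \<in> \<Lambda>" and c0: "cccz (X l0)" and cal: "\<forall>l\<in>\<Lambda> - {l0}. calibre_aleph1 (X l)"
  shows "cccz (product_topology X \<Lambda>)"
  unfolding cccz_def
proof (intro allI impI, rule ccontr)
  fix \<W> assume HW: "(\<forall>W\<in>\<W>. czs (product_topology X \<Lambda>) W \<and> W \<noteq> {}) \<and> pairwise disjnt \<W>"
    and unc: "uncountable \<W>"
  define P where "P = product_topology X \<Lambda>"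
  have "\<forall>W\<in>\<W>. \<exists>h. continuous_map P euclideanreal h \<and> W = {x\<in>topspace P. h x > 0}"
    using HW unfolding czs_def P_def by blast
  from bchoice[OF this] obtain h where h0: "\<forall>W\<in>\<W>. continuous_map P euclideanreal (h W) \<and> W = {x\<in>topspace P. h W x > 0}" ..
  hence h: "\<And>W. W \<in> \<W> \<Longrightarrow> continuous_map P euclideanreal (h W) \<and> W = {x\<in>topspace P. h W x > 0}"
    by blast
  have "\<forall>W\<in>\<W>. \<exists>p. p \<in> W" using HW by blast
  from bchoice[OF this] obtain p where p0: "\<forall>W\<in>\<W>. p W \<in> W" ..
  hence p: "\<And>W. W \<in> \<W> \<Longrightarrow> p W \<in> W" by blast
  have "\<forall>W\<in>\<W>. \<exists>U. finite {l\<in>\<Lambda>. U l \<noteq> topspace (X l)} \<and> (\<forall>l\<in>\<Lambda>. openin (X l) (U l)) \<and>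
          p W \<in> Pi\<^sub>E \<Lambda> U \<and> Pi\<^sub>E \<Lambda> U \<subseteq> W"
  proof
    fix W assume W: "W \<in> \<W>"
    have "openin P W" using h[OF W] cozero_open by metis
    thus "\<exists>U. finite {l\<in>\<Lambda>. U l \<noteq> topspace (X l)} \<and> (\<forall>l\<in>\<Lambda>. openin (X l) (U l)) \<and>
          p W \<in> Pi\<^sub>E \<Lambda> U \<and> Pi\<^sub>E \<Lambda> U \<subseteq> W"
      using p[OF W] unfolding P_def openin_product_topology_alt by blast
  qed
  from bchoice[OF this] obtain U where U: "\<forall>W\<in>\<W>. finite {l\<in>\<Lambda>. U W l \<noteq> topspace (X l)} \<and> (\<forall>l\<in>\<Lambda>. openin (X l) (U W l)) \<and>
          p W \<in> Pi\<^sub>E \<Lambda> (U W) \<and> Pi\<^sub>E \<Lambda> (U W) \<subseteq> W" ..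
  have Ufin: "\<And>W. W \<in> \<W> \<Longrightarrow> finite {l\<in>\<Lambda>. U W l \<noteq> topspace (X l)}"
    and Uopen: "\<And>W l. W \<in> \<W> \<Longrightarrow> l \<in> \<Lambda> \<Longrightarrow> openin (X l) (U W l)"
    and pU: "\<And>W. W \<in> \<W> \<Longrightarrow> p W \<in> Pi\<^sub>E \<Lambda> (U W)"
    and UW: "\<And>W. W \<in> \<W> \<Longrightarrow> Pi\<^sub>E \<Lambda> (U W) \<subseteq> W"
    using U by auto
  obtain W1 where W1: "W1 \<in> \<W>" using unc by (metis countable_empty ex_in_conv)
  have pUl: "p W l \<in> U W l" if "W \<in> \<W>" "l \<in> \<Lambda>" for W l
    using pU[OF that(1)] that(2) by (auto simp: PiE_iff)
  have Usub: "U W l \<subseteq> topspace (X l)" if "W \<in> \<W>" "l \<in> \<Lambda>" for W l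
    using Uopen[OF that] openin_subset by blast
  have neT: "\<forall>l\<in>\<Lambda> - {l0}. topspace (X l) \<noteq> {}"
    using pUl[OF W1] Usub[OF W1] by blast
  define S where "S W = {l\<in>\<Lambda>. U W l \<noteq> topspace (X l)} - {l0}" for W
  have Sfin: "finite (S W)" if "W \<in> \<W>" for W using Ufin[OF that] by (simp add: S_def)
  have "\<W> = (\<Union>n. {W\<in>\<W>. card (S W) \<le> n})" by auto
  have "\<not> (\<forall>n. countable {W\<in>\<W>. card (S W) \<le> n})"
  proof
    assume "\<forall>n. countable {W\<in>\<W>. card (S W) \<le> n}"
    hence "countable (\<Union>n. {W\<in>\<W>. card (S W) \<le> n})"
      by (intro countable_UN) auto
    hence "countable \<W>" using \<open>\<W> = (\<Union>n. {W\<in>\<W>. card (S W) \<le> n})\<close> by simp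
    thus False using unc by blast
  qed
  then obtain n where nu: "uncountable {W\<in>\<W>. card (S W) \<le> n}" by blast
  define I where "I = {W\<in>\<W>. card (S W) \<le> n}"
  have Une: "\<And>W l. W \<in> \<W> \<Longrightarrow> l \<in> \<Lambda> \<Longrightarrow> U W l \<noteq> {}" using pUl by blast
  have key: "uncountable I \<and> (\<forall>W\<in>I. finite (S W) \<and> card (S W) \<le> n \<and> S W \<subseteq> \<Lambda> - {l0} \<and>
            (\<forall>l\<in>S W. openin (X l) (U W l) \<and> U W l \<noteq> {}))"
    using Sfin Uopen Une nu by (auto simp: I_def S_def)
  from calib_prod[OF cal neT, rule_format, OF key] obtain J where
    J0: "J \<subseteq> I \<and> uncountable J \<and> (\<exists>q. (\<forall>l\<in>\<Lambda> - {l0}. q l \<in> topspace (X l)) \<and> (\<forall>W\<in>J. \<forall>l\<in>S W. q l \<in> U W l))" ..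
  have J: "J \<subseteq> I" "uncountable J" using J0 by auto
  from conjunct2[OF conjunct2[OF J0]] obtain q where
    qq: "(\<forall>l\<in>\<Lambda> - {l0}. q l \<in> topspace (X l)) \<and> (\<forall>W\<in>J. \<forall>l\<in>S W. q l \<in> U W l)" ..
  hence qT: "\<forall>l\<in>\<Lambda> - {l0}. q l \<in> topspace (X l)"
    and qU: "\<forall>W\<in>J. \<forall>l\<in>S W. q l \<in> U W l" by auto
  have JW: "J \<subseteq> \<W>" using J(1) by (auto simp: I_def)
  define r where "r x = (\<lambda>l. if l = l0 then x else if l \<in> \<Lambda> then q l else undefined)" for x
  have rc: "continuous_map (X l0) P r"
    unfolding P_def continuous_map_componentwise
  proof (intro conjI ballI)
    show "r ` topspace (X l0) \<subseteq> extensional \<Lambda>" using l0 by (auto simp: r_def extensional_def)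
    fix k assume k: "k \<in> \<Lambda>"
    show "continuous_map (X l0) (X k) (\<lambda>x. r x k)"
    proof (cases "k = l0")
      case True thus ?thesis by (simp add: r_def)
    next
      case False
      hence "q k \<in> topspace (X k)" using qT k by blast
      thus ?thesis using False k by (simp add: r_def)
    qed
  qed
  define T where "T W = {x\<in>topspace (X l0). h W (r x) > 0}" for W
  have Tczs: "czs (X l0) (T W)" if "W \<in> J" for W
  proof -
    have "continuous_map (X l0) euclideanreal (h W \<circ> r)"
      using continuous_map_compose[OF rc] h that JW by blast
    thus ?thesis unfolding czs_def T_def by (intro exI[of _ "h W \<circ> r"]) auto
  qed
  have Tne: "T W \<noteq> {}" if W: "W \<in> J" for W
  proof -
    have WW: "W \<in> \<W>" using W JW by blast
    have "r (p W l0) \<in> Pi\<^sub>E \<Lambda> (U W)"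
      unfolding PiE_iff
    proof (intro conjI ballI)
      fix l assume l: "l \<in> \<Lambda>"
      show "r (p W l0) l \<in> U W l"
      proof (cases "l = l0")
        case True thus ?thesis using pUl[OF WW l0] by (simp add: r_def)
      next
        case False
        show ?thesis
        proof (cases "l \<in> S W")
          case True thus ?thesis using qU W False l by (simp add: r_def)
        next
          case nS: False
          hence "U W l = topspace (X l)" using False l by (simp add: S_def)
          thus ?thesis using qT False l by (simp add: r_def)
        qed
      qed
    next
      show "r (p W l0) \<in> extensional \<Lambda>" using l0 by (auto simp: r_def extensional_def)
    qed
    hence "r (p W l0) \<in> W" using UW[OF WW] by blast
    hence "h W (r (p W l0)) > 0" using h[OF WW] by blast
    moreover have "p W l0 \<in> topspace (X l0)" using pUl[OF WW l0] Usub[OF WW l0] by blast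
    ultimately show ?thesis by (auto simp: T_def)
  qed
  have Tdis: "disjnt (T W) (T W')" if "W \<in> J" "W' \<in> J" "W \<noteq> W'" for W W'
  proof -
    have WW: "W \<in> \<W>" "W' \<in> \<W>" using that JW by auto
    have dj: "disjnt W W'" using HW WW that(3) unfolding pairwise_def by blast
    show ?thesis unfolding disjnt_def
    proof (rule equals0I)
      fix x assume x: "x \<in> T W \<inter> T W'"
      hence xt: "x \<in> topspace (X l0)" by (auto simp: T_def)
      hence "r x \<in> topspace P" using rc continuous_map_image_subset_topspace by blast
      hence "r x \<in> W" "r x \<in> W'" using x h[OF WW(1)] h[OF WW(2)] by (auto simp: T_def)
      thus False using dj by (auto simp: disjnt_def)
    qed
  qed
  have injT: "inj_on T J"
  proof (rule inj_onI, rule ccontr)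
    fix W W' assume WJ: "W \<in> J" "W' \<in> J" "T W = T W'" "W \<noteq> W'"
    hence "disjnt (T W) (T W')" using Tdis by blast
    hence "T W = {}" using WJ(3) by (simp add: disjnt_def)
    thus False using Tne WJ(1) by blast
  qed
  have "pairwise disjnt (T ` J)"
    unfolding pairwise_def
  proof (intro ballI impI)
    fix A B assume "A \<in> T ` J" "B \<in> T ` J" "A \<noteq> B"
    then obtain W W' where "W \<in> J" "W' \<in> J" "A = T W" "B = T W'" by blast
    moreover hence "W \<noteq> W'" using \<open>A \<noteq> B\<close> by blast
    ultimately show "disjnt A B" using Tdis by blast
  qed
  moreover have "\<forall>A\<in>T ` J. czs (X l0) A \<and> A \<noteq> {}" using Tczs Tne by blast
  ultimately have "countable (T ` J)" using c0 unfolding cccz_def by blast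
  hence "countable J" using injT countable_image_inj_on by blast
  thus False using J(2) by blast
qed

theorem corollary6p5:
  fixes X :: "'i \<Rightarrow> 'a topology" and \<Lambda> :: "'i set" and l0 :: 'i
  assumes "l0 \<in> \<Lambda>"
    and "countable_sup_property (X l0)"
    and "\<forall>l\<in>\<Lambda> - {l0}. calibre_aleph1 (X l)"
  shows "countable_sup_property (product_topology X \<Lambda>)"
  using csp_of_cccz prod_cccz cccz_of_csp assms by metis

end
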